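(* For any continuous probability measure $\mu$ on $\mathbb{R}^n$ and any $\alpha_1,\ldots,\alpha_4\in(0,1)$ with $\sum_{i=1}^4\alpha_i=1$, there exist two oriented hyperplanes $H_1,H_2$ such that $H_1^+\cap H_2^+$, $H_1^-\cap H_2^+$, $H_1^+\cap H_2^-$, $H_1^-\cap H_2^-$ have $\mu$-measure $\alpha_1,\alpha_2,\alpha_3,\alpha_4$, respectively.
   Context: A continuous probability measure on $\mathbb{R}^n$ is a Borel probability measure absolutely continuous with respect to Lebesgue measure. For an oriented hyperplane $H$, $H^+$ denotes the closed half-space in the direction of its normal and $H^-$ the closed half-space in the direction of the reverse normal. *)

theory Defs
  imports "HOL-Probability.Probability"
begin

text \<open>An oriented hyperplane is given by a nonzero normal vector u and offset c:
  H = {x. u \<bullet> x = c}.\<close>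

definition oriented_hyperplane :: "'a::euclidean_space \<times> real \<Rightarrow> bool" where
  "oriented_hyperplane H \<longleftrightarrow> fst H \<noteq> 0"

definition hpos :: "'a::euclidean_space \<times> real \<Rightarrow> 'a set" where
  "hpos H = {x. fst H \<bullet> x \<ge> snd H}"

definition hneg :: "'a::euclidean_space \<times> real \<Rightarrow> 'a set" where
  "hneg H = {x. fst H \<bullet> x \<le> snd H}"

definition continuous_prob_measure :: "'a::euclidean_space measure \<Rightarrow> bool" where
  "continuous_prob_measure \<mu> \<longleftrightarrow>
     prob_space \<mu> \<and> sets \<mu> = sets borel \<and> absolutely_continuous lborel \<mu>"

end

theory Submission
  imports Defs
begin

locale cpm = prob_space M for M :: "'a::euclidean_space measure" +
  assumes sets_M: "sets M = sets borel" and ac: "absolutely_continuous lborel M"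
begin

lemma space_M[simp]: "space M = UNIV"
  using sets_eq_imp_space_eq[OF sets_M] by simp

lemma sets_M_iff[simp, measurable_cong]: "A \<in> sets M \<longleftrightarrow> A \<in> sets borel"
  using sets_M by simp

lemma hs_ge[simp]: "{x. v \<bullet> x \<ge> d} \<in> sets M"
  by (simp add: borel_closed closed_halfspace_ge)

lemma hs_le[simp]: "{x. v \<bullet> x \<le> d} \<in> sets M"
  by (simp add: borel_closed closed_halfspace_le)

lemma line_null:
  assumes "v \<noteq> 0" shows "{x. v \<bullet> x = d} \<in> null_sets M"
proof -
  have c: "closed {x. v \<bullet> x = d}" by (simp add: closed_hyperplane)
  have "{x. v \<bullet> x = d} \<in> null_sets lebesgue"
    using negligible_hyperplane[of v d] assms negligible_iff_null_sets by blast
  then have "{x. v \<bullet> x = d} \<in> null_sets lborel"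
    using c null_sets_completion_iff[of _ lborel] borel_closed by (metis sets_lborel)
  then show ?thesis using ac unfolding absolutely_continuous_def by blast
qed


lemma cont_hs:
  assumes A: "A \<in> sets borel" and v: "vn \<longlonglongrightarrow> v" "v \<noteq> 0" and d: "dn \<longlonglongrightarrow> d"
  shows "(\<lambda>n. prob (A \<inter> {x. vn n \<bullet> x \<ge> dn n})) \<longlonglongrightarrow> prob (A \<inter> {x. v \<bullet> x \<ge> d})"
proof -
  have "(\<lambda>n. integral\<^sup>L M (indicator (A \<inter> {x. vn n \<bullet> x \<ge> dn n}) :: 'a \<Rightarrow> real))
      \<longlonglongrightarrow> integral\<^sup>L M (indicator (A \<inter> {x. v \<bullet> x \<ge> d}))"
  proof (rule integral_dominated_convergence[where w="\<lambda>_. 1"])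
    show "indicator (A \<inter> {x. v \<bullet> x \<ge> d}) \<in> borel_measurable M"
      using A by (intro borel_measurable_indicator) simp
    show "indicator (A \<inter> {x. vn n \<bullet> x \<ge> dn n}) \<in> borel_measurable M" for n
      using A by (intro borel_measurable_indicator) simp
    show "integrable M (\<lambda>_. 1::real)" by simp
    show "AE x in M. norm (indicator (A \<inter> {x. vn n \<bullet> x \<ge> dn n}) x :: real) \<le> 1" for n
      by (auto simp: indicator_def)
    have "AE x in M. x \<notin> {x. v \<bullet> x = d}"
      using line_null[OF v(2)] by (rule AE_not_in)
    then show "AE x in M. (\<lambda>n. indicator (A \<inter> {x. vn n \<bullet> x \<ge> dn n}) x :: real) \<longlonglongrightarrow> indicator (A \<inter> {x. v \<bullet> x \<ge> d}) x"
    proof (rule AE_mp, intro AE_I2 impI)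
      fix x assume "x \<notin> {x. v \<bullet> x = d}"
      then have ne: "v \<bullet> x - d \<noteq> 0" by simp
      have lim: "(\<lambda>n. vn n \<bullet> x - dn n) \<longlonglongrightarrow> v \<bullet> x - d"
        by (intro tendsto_intros v d)
      show "(\<lambda>n. indicator (A \<inter> {x. vn n \<bullet> x \<ge> dn n}) x :: real) \<longlonglongrightarrow> indicator (A \<inter> {x. v \<bullet> x \<ge> d}) x"
      proof (cases "v \<bullet> x - d > 0")
        case True
        then have "eventually (\<lambda>n. vn n \<bullet> x - dn n > 0) sequentially"
          using order_tendstoD(1)[OF lim True] by simp
        then have "eventually (\<lambda>n. (indicator (A \<inter> {x. vn n \<bullet> x \<ge> dn n}) x :: real) = indicator (A \<inter> {x. v \<bullet> x \<ge> d}) x) sequentially"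
          by eventually_elim (use True in \<open>auto simp: indicator_def\<close>)
        then show ?thesis by (rule tendsto_eventually)
      next
        case False
        then have F: "v \<bullet> x - d < 0" using ne by simp
        then have "eventually (\<lambda>n. vn n \<bullet> x - dn n < 0) sequentially"
          using order_tendstoD(2)[OF lim F] by simp
        then have "eventually (\<lambda>n. (indicator (A \<inter> {x. vn n \<bullet> x \<ge> dn n}) x :: real) = indicator (A \<inter> {x. v \<bullet> x \<ge> d}) x) sequentially"
          by eventually_elim (use F in \<open>auto simp: indicator_def\<close>)
        then show ?thesis by (rule tendsto_eventually)
      qed
    qed
  qed
  then show ?thesis by simp
qed

lemma prob_le_part:
  assumes A: "A \<in> sets borel" and v: "v \<noteq> 0"
  shows "prob (A \<inter> {x. v \<bullet> x \<le> d}) = prob A - prob (A \<inter> {x. v \<bullet> x \<ge> d})"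
proof -
  have e: "prob (A \<inter> {x. v \<bullet> x \<ge> d}) = prob (A \<inter> {x. v \<bullet> x > d})"
  proof (rule measure_eq_AE)
    have "AE x in M. x \<notin> {x. v \<bullet> x = d}"
      using line_null[OF v] by (rule AE_not_in)
    then show "AE x in M. (x \<in> A \<inter> {x. v \<bullet> x \<ge> d}) = (x \<in> A \<inter> {x. v \<bullet> x > d})"
      by eventually_elim auto
  qed (use A in \<open>auto simp: borel_open open_halfspace_gt\<close>)
  have u: "A = (A \<inter> {x. v \<bullet> x \<le> d}) \<union> (A \<inter> {x. v \<bullet> x > d})" by auto
  have "prob A = prob (A \<inter> {x. v \<bullet> x \<le> d}) + prob (A \<inter> {x. v \<bullet> x > d})"
    by (subst u, rule finite_measure_Union) (use A in \<open>auto simp: borel_open open_halfspace_gt\<close>)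
  then show ?thesis using e by simp
qed

lemma tight:
  assumes "e > 0" shows "\<exists>R\<ge>0. prob {x. norm x > R} < e"
proof -
  have "(\<lambda>n. prob {x. norm x > real n}) \<longlonglongrightarrow> prob (\<Inter>n. {x. norm x > real n})"
  proof (rule finite_Lim_measure_decseq)
    show "range (\<lambda>n. {x::'a. norm x > real n}) \<subseteq> sets M"
      by (auto simp: borel_open open_Collect_less continuous_on_norm_id)
    show "decseq (\<lambda>n. {x::'a. norm x > real n})"
      by (auto simp: decseq_def)
  qed
  moreover have "(\<Inter>n. {x::'a. norm x > real n}) = {}"
    by auto (metis reals_Archimedean2 less_asym)
  ultimately have "(\<lambda>n. prob {x. norm x > real n}) \<longlonglongrightarrow> 0" by simp
  then have "eventually (\<lambda>n. prob {x. norm x > real n} < e) sequentially"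
    using order_tendstoD(2) assms by blast
  then show ?thesis by (meson eventually_sequentially order_refl of_nat_0_le_iff)
qed

lemma bound_hi:
  assumes "norm v \<le> 2" "d > 2 * R"
  shows "prob (A \<inter> {x. v \<bullet> x \<ge> d}) \<le> prob {x. norm x > R}"
proof (rule finite_measure_mono)
  show "A \<inter> {x. v \<bullet> x \<ge> d} \<subseteq> {x. norm x > R}"
  proof
    fix x assume "x \<in> A \<inter> {x. v \<bullet> x \<ge> d}"
    then have "v \<bullet> x \<ge> d" by simp
    moreover have "v \<bullet> x \<le> norm v * norm x" by (rule norm_cauchy_schwarz)
    moreover have "norm v * norm x \<le> 2 * norm x" using assms(1) by (simp add: mult_right_mono)
    ultimately show "x \<in> {x. norm x > R}" using assms(2) by simp
  qed
  show "{x. norm x > R} \<in> sets M"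
    by (auto simp: borel_open open_Collect_less continuous_on_norm_id)
qed

lemma bound_lo:
  assumes A: "A \<in> sets borel" and "norm v \<le> 2" "d < - 2 * R"
  shows "prob A - prob {x. norm x > R} \<le> prob (A \<inter> {x. v \<bullet> x \<ge> d})"
proof -
  have N: "{x. norm x > R} \<in> sets M"
    by (auto simp: borel_open open_Collect_less continuous_on_norm_id)
  have "A \<subseteq> (A \<inter> {x. v \<bullet> x \<ge> d}) \<union> {x. norm x > R}"
  proof
    fix x assume x: "x \<in> A"
    show "x \<in> (A \<inter> {x. v \<bullet> x \<ge> d}) \<union> {x. norm x > R}"
    proof (cases "norm x > R")
      case False
      have "- (v \<bullet> x) \<le> norm v * norm x"
        using norm_cauchy_schwarz[of "-v" x] by simp
      moreover have "norm v * norm x \<le> 2 * norm x" using assms(2) by (simp add: mult_right_mono)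
      ultimately have "v \<bullet> x \<ge> d" using False assms(3) by simp
      then show ?thesis using x by simp
    qed simp
  qed
  then have "prob A \<le> prob ((A \<inter> {x. v \<bullet> x \<ge> d}) \<union> {x. norm x > R})"
    using A N by (intro finite_measure_mono) auto
  also have "\<dots> \<le> prob (A \<inter> {x. v \<bullet> x \<ge> d}) + prob {x. norm x > R}"
    using A N by (intro measure_Un_le) auto
  finally show ?thesis by simp
qed

lemma mono_hs:
  assumes "d \<le> d'" and A: "A \<in> sets borel"
  shows "prob (A \<inter> {x. v \<bullet> x \<ge> d'}) \<le> prob (A \<inter> {x. v \<bullet> x \<ge> d})"
proof (rule finite_measure_mono)
  show "A \<inter> {x. v \<bullet> x \<ge> d'} \<subseteq> A \<inter> {x. v \<bullet> x \<ge> d}" using assms by auto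
  show "A \<inter> {x. v \<bullet> x \<ge> d} \<in> sets M" using A by simp
qed

lemma isCont_hs:
  assumes "A \<in> sets borel" "v \<noteq> 0"
  shows "isCont (\<lambda>d. prob (A \<inter> {x. v \<bullet> x \<ge> d})) d"
  unfolding continuous_at_sequentially comp_def
  using cont_hs[OF assms(1) tendsto_const assms(2)] by blast

lemma main_loc:
  fixes a1 a2 a3 a4 :: real and e1 e2 :: 'a
  assumes pos: "0 < a1" "0 < a2" "0 < a3" "0 < a4" and sum1: "a1 + a2 + a3 + a4 = 1"
    and e: "e1 \<in> Basis" "e2 \<in> Basis" "e1 \<noteq> e2"
  shows "\<exists>H1 H2. oriented_hyperplane H1 \<and> oriented_hyperplane H2 \<and>
           prob (hpos H1 \<inter> hpos H2) = a1 \<and>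
           prob (hneg H1 \<inter> hpos H2) = a2 \<and>
           prob (hpos H1 \<inter> hneg H2) = a3 \<and>
           prob (hneg H1 \<inter> hneg H2) = a4"
proof -
  define e0 where "e0 = min (min a1 a2) (min a3 a4)"
  have e0: "e0 > 0" "e0 \<le> a1" "e0 \<le> a2" "e0 \<le> a3" "e0 \<le> a4"
    using pos unfolding e0_def by (simp_all add: min_def)
  obtain R where R: "R \<ge> 0" "prob {x. norm x > R} < e0" using tight[OF e0(1)] by auto
  have e1n: "norm e1 = 1" by (rule norm_Basis[OF e(1)])
  have e1z: "e1 \<noteq> 0" by (rule nonzero_Basis[OF e(1)])
  have e12: "e1 \<bullet> e2 = 0" "e2 \<bullet> e2 = 1" "e1 \<bullet> e1 = 1" "e2 \<bullet> e1 = 0"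
    using inner_Basis[OF e(1) e(2)] inner_Basis[OF e(2) e(2)] inner_Basis[OF e(1) e(1)]
      inner_Basis[OF e(2) e(1)] e(3) by simp_all
  have pU: "prob UNIV = 1" using prob_space space_M by simp
  define h where "h c = prob (UNIV \<inter> {x. e1 \<bullet> x \<ge> c})" for c
  have hc: "isCont h x" for x
    unfolding h_def by (rule isCont_hs[OF _ e1z]) simp
  have "h (2*R+1) \<le> prob {x. norm x > R}"
    unfolding h_def by (rule bound_hi) (simp_all add: e1n)
  then have hhi: "h (2*R+1) \<le> a1 + a3" using R e0 pos by linarith
  have "prob UNIV - prob {x. norm x > R} \<le> h (-2*R-1)"
    unfolding h_def by (rule bound_lo) (simp_all add: e1n)
  then have hlo: "a1 + a3 \<le> h (-2*R-1)" using R e0 pos pU sum1 by linarith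
  have "\<exists>c. -2*R-1 \<le> c \<and> c \<le> 2*R+1 \<and> h c = a1 + a3"
    by (rule IVT2[of h]) (use hhi hlo hc R(1) in simp_all)
  then obtain c1 where c1: "prob {x. e1 \<bullet> x \<ge> c1} = a1 + a3" unfolding h_def by auto
  define P where "P = {x. e1 \<bullet> x \<ge> c1}"
  define N where "N = {x. e1 \<bullet> x \<le> c1}"
  have PN[simp]: "P \<in> sets borel" "N \<in> sets borel" unfolding P_def N_def by simp_all
  have pP: "prob P = a1 + a3" using c1 P_def by simp
  have pN: "prob N = a2 + a4"
    using prob_le_part[of UNIV e1 c1] e1z c1 pU sum1 unfolding N_def by simp
  define v where "v t = (1 - 2*t) *\<^sub>R e1 + (t*(1-t)) *\<^sub>R e2" for t :: real
  have vnz: "v t \<noteq> 0" for t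
  proof
    assume "v t = 0"
    then have "v t \<bullet> e1 = 0" "v t \<bullet> e2 = 0" by simp_all
    then have "1 - 2*t = 0" "t*(1-t) = 0" using e12 by (simp_all add: v_def inner_add_left)
    then show False by (auto simp: algebra_simps)
  qed
  have vn: "norm (v t) \<le> 2" if "t \<in> {0..1}" for t
  proof -
    have "norm (v t) \<le> norm ((1 - 2*t) *\<^sub>R e1) + norm ((t*(1-t)) *\<^sub>R e2)"
      unfolding v_def by (rule norm_triangle_ineq)
    also have "\<dots> = \<bar>1 - 2*t\<bar> + \<bar>t*(1-t)\<bar>" using e by simp
    also have "\<dots> \<le> 2"
    proof -
      have h1: "0 \<le> t*(1-t)" using that by simp
      have h2: "t*(1-t) \<le> 1" using that by (intro mult_le_one) auto
      have h3: "\<bar>1 - 2*t\<bar> \<le> 1" using that by auto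
      show ?thesis using h1 h2 h3 by simp
    qed
    finally show ?thesis .
  qed
  have v0: "v 0 = e1" and v1: "v 1 = - e1" by (simp_all add: v_def)
  have vlim: "(\<lambda>n. v (tn n)) \<longlonglongrightarrow> v t" if "tn \<longlonglongrightarrow> t" for tn t
    unfolding v_def by (intro tendsto_intros that)
  define g where "g t d = prob (P \<inter> {x. v t \<bullet> x \<ge> d})" for t d
  define f where "f t d = prob (N \<inter> {x. v t \<bullet> x \<ge> d})" for t d
  have gbound: "-2*R \<le> d \<and> d \<le> 2*R" if "t \<in> {0..1}" "g t d = a1" for t d
  proof (rule ccontr)
    assume "\<not> (-2*R \<le> d \<and> d \<le> 2*R)"
    then consider "d > 2*R" | "d < -2*R" by linarith
    then show False
    proof cases
      case 1
      then have "g t d \<le> prob {x. norm x > R}" unfolding g_def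
        by (intro bound_hi vn that)
      then show False using that R e0 by linarith
    next
      case 2
      then have "prob P - prob {x. norm x > R} \<le> g t d" unfolding g_def
        by (intro bound_lo vn that) auto
      then show False using that R e0 pP by linarith
    qed
  qed
  have gex: "\<exists>d. g t d = a1" if "t \<in> {0..1}" for t
  proof -
    have "\<exists>d. -2*R-1 \<le> d \<and> d \<le> 2*R+1 \<and> g t d = a1"
      unfolding g_def
    proof (rule IVT2)
      have "prob (P \<inter> {x. v t \<bullet> x \<ge> 2*R+1}) \<le> prob {x. norm x > R}"
        by (rule bound_hi) (use vn that in auto)
      then show "prob (P \<inter> {x. v t \<bullet> x \<ge> 2*R+1}) \<le> a1" using R e0 by linarith
      have "prob P - prob {x. norm x > R} \<le> prob (P \<inter> {x. v t \<bullet> x \<ge> -2*R-1})"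
        by (rule bound_lo) (use vn that in auto)
      then show "a1 \<le> prob (P \<inter> {x. v t \<bullet> x \<ge> -2*R-1})" using R e0 pP by linarith
      show "-2*R-1 \<le> 2*R+1" using R by simp
      show "\<forall>x. -2*R-1 \<le> x \<and> x \<le> 2*R+1 \<longrightarrow> isCont (\<lambda>d. prob (P \<inter> {x. v t \<bullet> x \<ge> d})) x"
        using isCont_hs[OF _ vnz] by simp
    qed
    then show ?thesis by auto
  qed
  have closedS: "closed {t\<in>{0..1}. \<exists>d. g t d = a1 \<and> f t d \<in> C}" if C: "closed C" for C
    unfolding closed_sequential_limits
  proof (intro allI impI, elim conjE)
    fix tn l assume tn: "\<forall>n. tn n \<in> {t\<in>{0..1}. \<exists>d. g t d = a1 \<and> f t d \<in> C}" and lim: "tn \<longlonglongrightarrow> l"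
    then have "\<forall>n. \<exists>d. g (tn n) d = a1 \<and> f (tn n) d \<in> C" by auto
    then obtain dn where dn: "\<And>n. g (tn n) (dn n) = a1" "\<And>n. f (tn n) (dn n) \<in> C" by metis
    have dnb: "\<forall>n. dn n \<in> {-2*R..2*R}"
    proof
      fix n have "tn n \<in> {0..1}" using tn by blast
      then show "dn n \<in> {-2*R..2*R}" using gbound[OF _ dn(1)[of n]] by auto
    qed
    obtain dl r where dl: "strict_mono (r :: nat \<Rightarrow> nat)" "(dn \<circ> r) \<longlonglongrightarrow> dl"
      using seq_compactE[OF compact_imp_seq_compact[OF compact_Icc] dnb] by metis
    have tl: "(tn \<circ> r) \<longlonglongrightarrow> l" using LIMSEQ_subseq_LIMSEQ[OF lim dl(1)] .
    have l01: "l \<in> {0..1}"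
      using closed_sequentially[OF closed_atLeastAtMost _ lim] tn by auto
    have vl: "(\<lambda>n. v ((tn \<circ> r) n)) \<longlonglongrightarrow> v l" by (rule vlim[OF tl])
    have gl: "(\<lambda>n. g ((tn \<circ> r) n) ((dn \<circ> r) n)) \<longlonglongrightarrow> g l dl"
      unfolding g_def by (rule cont_hs[OF PN(1) vl vnz dl(2)])
    have fl: "(\<lambda>n. f ((tn \<circ> r) n) ((dn \<circ> r) n)) \<longlonglongrightarrow> f l dl"
      unfolding f_def by (rule cont_hs[OF PN(2) vl vnz dl(2)])
    have "g l dl = a1" using gl dn(1) by (simp add: LIMSEQ_const_iff)
    moreover have "f l dl \<in> C"
      using closed_sequentially[OF C _ fl] dn(2) by auto
    ultimately show "l \<in> {t\<in>{0..1}. \<exists>d. g t d = a1 \<and> f t d \<in> C}" using l01 by auto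
  qed
  define SA where "SA = {t\<in>{0..1}. \<exists>d. g t d = a1 \<and> f t d \<in> {..a2}}"
  define SB where "SB = {t\<in>{0..1}. \<exists>d. g t d = a1 \<and> f t d \<in> {a2..}}"
  have cA: "closed SA" unfolding SA_def by (rule closedS) simp
  have cB: "closed SB" unfolding SB_def by (rule closedS) simp
  have cover: "{0..1} \<subseteq> SA \<union> SB"
  proof
    fix t :: real assume t: "t \<in> {0..1}"
    then obtain d where gd: "g t d = a1" using gex by blast
    show "t \<in> SA \<union> SB"
    proof (cases "f t d \<le> a2")
      case True
      then have "t \<in> SA" using t gd unfolding SA_def by blast
      then show ?thesis by blast
    next
      case False
      then have "t \<in> SB" using t gd unfolding SB_def by auto
      then show ?thesis by blast
    qed
  qed
  have A0: "0 \<in> SA"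
  proof -
    obtain d where d: "g 0 d = a1" using gex by fastforce
    have "d > c1"
    proof (rule ccontr)
      assume "\<not> d > c1"
      then have "P \<inter> {x. v 0 \<bullet> x \<ge> d} = P" by (auto simp: P_def v0)
      then show False using d pP pos unfolding g_def by simp
    qed
    then have "N \<inter> {x. v 0 \<bullet> x \<ge> d} = {}" by (auto simp: N_def v0)
    then have "f 0 d = 0" unfolding f_def by simp
    then show ?thesis using d pos unfolding SA_def by auto
  qed
  have B1: "1 \<in> SB"
  proof -
    obtain d where d: "g 1 d = a1" using gex by fastforce
    have "c1 \<le> - d"
    proof (rule ccontr)
      assume "\<not> c1 \<le> - d"
      then have "P \<inter> {x. v 1 \<bullet> x \<ge> d} = {}" by (auto simp: P_def v1)
      then show False using d pos unfolding g_def by simp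
    qed
    then have "N \<inter> {x. v 1 \<bullet> x \<ge> d} = N" by (auto simp: N_def v1)
    then have "f 1 d = a2 + a4" unfolding f_def using pN by simp
    then show ?thesis using d pos unfolding SB_def by auto
  qed
  have "SA \<inter> SB \<inter> {0..1} \<noteq> {}"
  proof
    assume H: "SA \<inter> SB \<inter> {0..1} = {}"
    have "\<exists>A B. closed A \<and> closed B \<and> {0..1::real} \<subseteq> A \<union> B \<and> A \<inter> B \<inter> {0..1} = {} \<and>
        A \<inter> {0..1} \<noteq> {} \<and> B \<inter> {0..1} \<noteq> {}"
      using cA cB cover H A0 B1 by (intro exI[of _ SA] exI[of _ SB]) auto
    then show False using connected_Icc[of "0::real" 1] unfolding connected_closed by blast
  qed
  then obtain t d1 d2 where t: "t \<in> {0..1}" and d1: "g t d1 = a1" "f t d1 \<le> a2"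
    and d2: "g t d2 = a1" "f t d2 \<ge> a2"
    unfolding SA_def SB_def by auto
  have "\<exists>d. g t d = a1 \<and> f t d = a2"
  proof (cases "d2 \<le> d1")
    case True
    have "\<exists>d. d2 \<le> d \<and> d \<le> d1 \<and> f t d = a2"
      unfolding f_def
      by (rule IVT2) (use True d1 d2 isCont_hs[OF _ vnz] in \<open>auto simp: f_def\<close>)
    then obtain d where d: "d2 \<le> d" "d \<le> d1" "f t d = a2" by blast
    have "g t d1 \<le> g t d" "g t d \<le> g t d2" unfolding g_def
      using d by (auto intro!: mono_hs)
    then show ?thesis using d d1 d2 by auto
  next
    case False
    then have "f t d2 \<le> f t d1" unfolding f_def by (auto intro!: mono_hs)
    then show ?thesis using d1 d2 by (intro exI[of _ d2]) auto
  qed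
  then obtain d where d: "g t d = a1" "f t d = a2" by blast
  show ?thesis
  proof (intro exI conjI)
    show "oriented_hyperplane (e1, c1)" using e1z by (simp add: oriented_hyperplane_def)
    show "oriented_hyperplane (v t, d)" using vnz by (simp add: oriented_hyperplane_def)
    show "prob (hpos (e1, c1) \<inter> hpos (v t, d)) = a1"
      using d unfolding g_def hpos_def P_def by simp
    show "prob (hneg (e1, c1) \<inter> hpos (v t, d)) = a2"
      using d unfolding f_def hpos_def hneg_def N_def by simp
    have "prob (P \<inter> {x. v t \<bullet> x \<le> d}) = a3"
      using prob_le_part[OF PN(1) vnz] d pP unfolding g_def by simp
    then show "prob (hpos (e1, c1) \<inter> hneg (v t, d)) = a3"
      unfolding hpos_def hneg_def P_def by simp
    have "prob (N \<inter> {x. v t \<bullet> x \<le> d}) = a4"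
      using prob_le_part[OF PN(2) vnz] d pN unfolding f_def by simp
    then show "prob (hneg (e1, c1) \<inter> hneg (v t, d)) = a4"
      unfolding hneg_def N_def by simp
  qed
qed

end

theorem mainTheorem7:
  fixes \<mu> :: "'a::euclidean_space measure" and \<alpha> :: "nat \<Rightarrow> real"
  assumes "DIM('a) \<ge> 2"
    and "continuous_prob_measure \<mu>"
    and "\<And>i. i \<in> {1..4} \<Longrightarrow> 0 < \<alpha> i \<and> \<alpha> i < 1"
    and "(\<Sum>i=1..4. \<alpha> i) = 1"
  shows "\<exists>H1 H2. oriented_hyperplane H1 \<and> oriented_hyperplane H2 \<and>
           measure \<mu> (hpos H1 \<inter> hpos H2) = \<alpha> 1 \<and>
           measure \<mu> (hneg H1 \<inter> hpos H2) = \<alpha> 2 \<and>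
           measure \<mu> (hpos H1 \<inter> hneg H2) = \<alpha> 3 \<and>
           measure \<mu> (hneg H1 \<inter> hneg H2) = \<alpha> 4"
proof -
  note a = assms(3)
  have ac: "cpm \<mu>" using assms(2) unfolding continuous_prob_measure_def
    by (simp add: cpm_def cpm_axioms_def)
  interpret cpm \<mu> by (rule ac)
  have "Basis \<noteq> ({}::'a set)" by simp
  then obtain e1 :: 'a where e1: "e1 \<in> Basis" by blast
  have "card (Basis - {e1}) \<ge> 1" using assms(1) e1 by simp
  then have "Basis - {e1} \<noteq> {}" by (metis card.empty not_one_le_zero)
  then obtain e2 where e2: "e2 \<in> Basis" "e2 \<noteq> e1" by blast
  have s: "(\<Sum>i=1..4. \<alpha> i) = \<alpha> 1 + \<alpha> 2 + \<alpha> 3 + \<alpha> 4"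
    by (simp add: numeral_eq_Suc)
  show ?thesis
    using main_loc[of "\<alpha> 1" "\<alpha> 2" "\<alpha> 3" "\<alpha> 4" e1 e2] a[of 1] a[of 2] a[of 3] a[of 4]
      assms(4) s e1 e2 by auto
qed

end
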